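(* Let $y_1\in\mathbb R$, $H>0$, $\beta>1$, $\gamma>1$, $q>0$, and $\beta'$ with $\frac1\beta+\frac1{\beta'}=1$. Define, for $x,y\ge y_1$, $$g(x,y)=\begin{cases}1+H(1+|x|)^{-\gamma}, & y_1\le x\le y,\\ He^{(y-x)/q}, & y_1\le y<x<\infty,\end{cases}$$ and for a measurable $\phi:[y_1,\infty)\to[0,\infty)$ with $\int_{y_1}^\infty\phi^{\beta'}\le1$ let $$F(y)=y-\Big(\int_{y_1}^\infty g(x,y)\phi(x)\,dx\Big)^\beta,\qquad y\ge y_1.$$ Then there exists a constant $C$ independent of $\phi$ such that $\int_{y_1}^\infty e^{-F(y)}\,dy\le C$. *)

theory Defs
  imports "HOL-Analysis.Analysis"
begin

definition gker :: "real \<Rightarrow> real \<Rightarrow> real \<Rightarrow> real \<Rightarrow> real \<Rightarrow> real" where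
  "gker H \<gamma> q x y = (if x \<le> y then 1 + H * (1 + \<bar>x\<bar>) powr (-\<gamma>) else H * exp ((y - x) / q))"

definition Ffun :: "real \<Rightarrow> real \<Rightarrow> real \<Rightarrow> real \<Rightarrow> real \<Rightarrow> (real \<Rightarrow> real) \<Rightarrow> real \<Rightarrow> real" where
  "Ffun y1 H \<beta> \<gamma> q \<phi> y = y - (LBINT x:{y1..}. gker H \<gamma> q x y * \<phi> x) powr \<beta>"

end

theory Submission
  imports Defs
begin

lemma exp_le_aux: "(x::real) \<ge> 0 \<Longrightarrow> exp x \<le> 1 + x * exp x"
proof -
  assume x: "x \<ge> 0"
  have "1 - x \<le> exp (-x)" using exp_ge_add_one_self[of "-x"] by simp
  hence "(1 - x) * exp x \<le> exp (-x) * exp x" by (simp add: mult_right_mono)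
  also have "\<dots> = 1" by (simp add: exp_minus)
  finally show ?thesis by (simp add: algebra_simps)
qed

lemma powr_le_exp_aux:
  fixes Q p e :: real
  assumes "Q > 0" "Q \<le> 1 + e" "p \<ge> 0"
  shows "Q powr p \<le> exp (p * e)"
proof -
  have "ln Q \<le> Q - 1" using assms(1) ln_le_minus_one by simp
  hence "p * ln Q \<le> p * e" using assms by (intro mult_left_mono) auto
  thus ?thesis using assms(1) by (simp add: powr_def mult.commute)
qed

lemma young_opt:
  fixes b b' P Q :: real
  assumes b: "b > 1" "b' > 1" "1/b + 1/b' = 1" and PQ: "P > 0" "Q > 0"
  defines "t \<equiv> (Q/P) powr (1/(b*b'))"
  shows "t > 0" "t powr b * P / b + t powr (-b') * Q / b' = P powr (1/b) * Q powr (1/b')"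
proof -
  show "t > 0" using PQ by (simp add: t_def)
  have bb: "b' = b/(b-1)" using b by (auto simp: field_simps)
  obtain p q where pq: "P = exp p" "Q = exp q" using PQ by (metis exp_ln)
  have 1: "t powr b * P = P powr (1/b) * Q powr (1/b')"
    using b unfolding t_def powr_def pq
    by (simp add: exp_diff[symmetric] exp_add[symmetric] bb field_simps)
  have 2: "t powr (-b') * Q = P powr (1/b) * Q powr (1/b')"
    using b unfolding t_def powr_def pq
    by (simp add: exp_diff[symmetric] exp_add[symmetric] bb field_simps)
  show "t powr b * P / b + t powr (-b') * Q / b' = P powr (1/b) * Q powr (1/b')"
    using 1 2 b by (metis add_divide_distrib distrib_left mult.right_neutral times_divide_eq_right)
qed


lemma young_min:
  fixes b b' P Q I :: real
  assumes b: "b > 1" "b' > 1" "1/b + 1/b' = 1" and PQ: "P > 0" "Q > 0" and I: "I \<ge> 0"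
    and H: "\<And>t. t > 0 \<Longrightarrow> I \<le> t powr b * P / b + t powr (-b') * Q / b'"
  shows "I powr b \<le> P * Q powr (b - 1)"
proof -
  define t where "t = (Q/P) powr (1/(b*b'))"
  have "I \<le> P powr (1/b) * Q powr (1/b')"
    using H[of t] young_opt[OF b PQ] unfolding t_def by simp
  hence "I powr b \<le> (P powr (1/b) * Q powr (1/b')) powr b"
    using I b by (intro powr_mono2) auto
  also have "\<dots> = P * Q powr (b/b')"
    using PQ b by (simp add: powr_mult powr_powr)
  also have "b/b' = b - 1" using b by (auto simp: field_simps)
  finally show ?thesis .
qed

lemma claimA:
  fixes b b' A B m u I :: real
  assumes b: "b > 1" "b' > 1" "1/b + 1/b' = 1" and AB: "A + B > 0" "A \<ge> 0" "B \<ge> 0"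
    and mu: "m \<ge> 0" "u \<ge> 0" "m + u \<le> 1" and I: "I \<ge> 0"
    and H: "\<And>t1 t2. t1 > 0 \<Longrightarrow> t2 > 0 \<Longrightarrow>
       I \<le> t1 powr b * A / b + t1 powr (-b') * m / b' + t2 powr b * B / b + t2 powr (-b') * u / b'"
  shows "I powr b \<le> A + B"
proof -
  have "I powr b \<le> (A + B) * 1 powr (b - 1)"
  proof (rule young_min[OF b AB(1) _ I])
    fix t :: real assume t: "t > 0"
    have "I \<le> t powr b * A / b + t powr (-b') * m / b' + t powr b * B / b + t powr (-b') * u / b'"
      using H[OF t t] .
    also have "\<dots> = t powr b * (A + B) / b + t powr (-b') * (m + u) / b'"
      unfolding distrib_left add_divide_distrib by linarith
    also have "\<dots> \<le> t powr b * (A + B) / b + t powr (-b') * 1 / b'"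
      using mu b t by (intro add_left_mono divide_right_mono mult_left_mono) auto
    finally show "I \<le> t powr b * (A + B) / b + t powr (-b') * 1 / b'" .
  qed simp
  thus ?thesis by simp
qed

lemma claimU:
  fixes b b' A K mu m u I :: real
  assumes b: "b > 1" "b' > 1" "1/b + 1/b' = 1" and A: "A > 0" "K \<ge> 0" "mu \<ge> 0" "A \<ge> 2 * (K + mu)"
    and mu: "m \<ge> 0" "u \<ge> 0" "m + u \<le> 1" and I: "I \<ge> 0"
    and H: "\<And>t1 t2. t1 > 0 \<Longrightarrow> t2 > 0 \<Longrightarrow>
       I \<le> t1 powr b * A / b + t1 powr (-b') * m / b' + t2 powr b * K / b + t2 powr (-b') * u / b'"
    and low: "I powr b \<ge> A - K - mu"
  shows "u \<le> 2 * (K + mu + 2 powr b * K) / ((b - 1) * (1 - 2 powr (-b')) * A)"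
proof -
  define c where "c = 1 - 2 powr (-b')"
  have "2 powr (-b') < 2 powr 0" using b by (intro powr_less_mono) auto
  hence c: "0 < c" "c < 1" using b unfolding c_def by auto
  define Q where "Q = 1 - c * u"
  have u1: "u \<le> 1" using mu by linarith
  have "c * u \<le> c" using c mu u1 by (simp add: mult_left_le)
  hence Q: "Q > 0" unfolding Q_def using c by linarith
  have "I powr b \<le> (A + 2 powr b * K) * Q powr (b - 1)"
  proof (rule young_min[OF b _ Q I])
    show "A + 2 powr b * K > 0" using A by (simp add: add_pos_nonneg)
    fix t :: real assume t: "t > 0"
    have "I \<le> t powr b * A / b + t powr (-b') * m / b' + (2*t) powr b * K / b + (2*t) powr (-b') * u / b'"
      using H[of t "2*t"] t by simp
    also have "\<dots> = t powr b * (A + 2 powr b * K) / b + t powr (-b') * (m + 2 powr (-b') * u) / b'"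
      using t unfolding powr_mult[of 2 t, simplified] powr_mult[of 2 t, simplified] distrib_left add_divide_distrib
      by (simp add: powr_mult mult_ac)
    also have "\<dots> \<le> t powr b * (A + 2 powr b * K) / b + t powr (-b') * Q / b'"
      using mu b t unfolding Q_def c_def by (intro add_left_mono divide_right_mono mult_left_mono) (auto simp: algebra_simps)
    finally show "I \<le> t powr b * (A + 2 powr b * K) / b + t powr (-b') * Q / b'" .
  qed
  also have "Q powr (b - 1) \<le> exp ((b - 1) * (- (c * u)))"
    using Q b unfolding Q_def by (intro powr_le_exp_aux) auto
  finally have 1: "I powr b \<le> (A + 2 powr b * K) * exp (- ((b - 1) * c * u))"
    using A by (smt (verit) mult_left_mono mult_minus_right mult.assoc powr_ge_zero)
  define x where "x = (b - 1) * c * u"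
  have x: "x \<ge> 0" unfolding x_def using b c mu by auto
  have "(1 + x) * exp (-x) \<le> 1"
    using exp_ge_add_one_self[of x] by (simp add: exp_minus field_simps)
  note e = this
  have P0: "A + 2 powr b * K \<ge> 0" using A by simp
  have "A - K - mu \<le> (A + 2 powr b * K) * exp (-x)" using low 1 unfolding x_def by linarith
  hence "(A - K - mu) * (1 + x) \<le> (A + 2 powr b * K) * exp (-x) * (1 + x)"
    using x by (intro mult_right_mono) auto
  also have "\<dots> = (A + 2 powr b * K) * ((1 + x) * exp (-x))" by (simp add: mult_ac)
  also have "\<dots> \<le> (A + 2 powr b * K) * 1" using e P0 by (intro mult_left_mono) auto
  finally have "(A - K - mu) * (1 + x) \<le> (A + 2 powr b * K)" by simp
  hence "(A - K - mu) * x \<le> K + mu + 2 powr b * K" by (simp add: algebra_simps)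
  moreover have "A / 2 * x \<le> (A - K - mu) * x" using A x by (intro mult_right_mono) auto
  ultimately have "A / 2 * x \<le> K + mu + 2 powr b * K" by linarith
  hence "u * ((b - 1) * c * A) \<le> 2 * (K + mu + 2 powr b * K)" unfolding x_def by (simp add: field_simps)
  moreover have "(b - 1) * c * A > 0" using b c A by auto
  ultimately show ?thesis unfolding c_def[symmetric] by (simp add: pos_le_divide_eq)
qed


lemma claimY:
  fixes b b' A B K mu m u U I :: real
  assumes b: "b > 1" "b' > 1" "1/b + 1/b' = 1" and A: "A > 0" "B \<ge> 0" "K \<ge> 0" "mu \<ge> 0"
    and mu: "m \<ge> 0" "u \<ge> 0" "m \<le> 1" "u \<le> U" and I: "I \<ge> 0"
    and U1: "4 powr (b'/b) * U \<le> 1" and U2: "(b-1) * exp (b-1) * (4 powr (b'/b) * U) \<le> 1"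
    and H: "\<And>t1 t2. t1 > 0 \<Longrightarrow> t2 > 0 \<Longrightarrow>
       I \<le> t1 powr b * A / b + t1 powr (-b') * m / b' + t2 powr b * B / b + t2 powr (-b') * u / b'"
    and low: "I powr b \<ge> A + B - 2 * K - mu"
  shows "B \<le> 2 * (2 * K + mu + (b-1) * exp (b-1) * (4 powr (b'/b) * U) * A)"
proof -
  define r where "r = 4 powr (b'/b)"
  define rho where "rho = 4 powr (-1/b)"
  define e where "e = r * U"
  define d where "d = (b-1) * exp (b-1)"
  have r1: "rho powr b = 4 powr (-1/b * b)" unfolding rho_def by (rule powr_powr)
  have r2: "rho powr (-b') = 4 powr (-1/b * -b')" unfolding rho_def by (rule powr_powr)
  have rho: "rho > 0" "rho powr b = 1/4" "rho powr (-b') = r"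
    using b r1 r2 unfolding r_def by (auto simp: rho_def powr_minus_divide)
  have U0: "U \<ge> 0" using mu by linarith
  have e0: "e \<ge> 0" unfolding e_def r_def using U0 by simp
  have "I powr b \<le> (A + B/4) * (1 + e) powr (b - 1)"
  proof (rule young_min[OF b _ _ I])
    show "A + B/4 > 0" using A by simp
    show "1 + e > 0" using e0 by simp
    fix t :: real assume t: "t > 0"
    have "I \<le> t powr b * A / b + t powr (-b') * m / b' + (rho*t) powr b * B / b + (rho*t) powr (-b') * u / b'"
      using H[of t "rho*t"] t rho by simp
    also have "\<dots> = t powr b * (A + B/4) / b + t powr (-b') * (m + r * u) / b'"
      using t rho(1) unfolding powr_mult[of rho t, simplified] powr_mult[of rho t, simplified] distrib_left add_divide_distrib rho(2,3)
      by (simp add: mult_ac)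
    also have "\<dots> \<le> t powr b * (A + B/4) / b + t powr (-b') * (1 + e) / b'"
      using mu b t unfolding e_def r_def by (intro add_left_mono divide_right_mono mult_left_mono add_mono) auto
    finally show "I \<le> t powr b * (A + B/4) / b + t powr (-b') * (1 + e) / b'" .
  qed
  also have "(1 + e) powr (b - 1) \<le> exp ((b - 1) * e)"
    using e0 b by (intro powr_le_exp_aux) auto
  also have "\<dots> \<le> 1 + (b - 1) * e * exp ((b - 1) * e)"
    using exp_le_aux[of "(b-1)*e"] e0 b by simp
  also have "\<dots> \<le> 1 + d * e"
  proof -
    have "e \<le> 1" using U1 unfolding e_def r_def .
    hence "exp ((b - 1) * e) \<le> exp (b - 1)" using b e0 by (simp add: mult_left_le)
    hence "(b - 1) * e * exp ((b - 1) * e) \<le> (b - 1) * e * exp (b - 1)"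
      using b e0 by (intro mult_left_mono) auto
    thus ?thesis unfolding d_def by (simp add: mult_ac)
  qed
  finally have 1: "I powr b \<le> (A + B/4) * (1 + d * e)"
    using A by (simp add: mult_left_mono)
  have de: "d * e \<le> 1" using U2 unfolding d_def e_def r_def by (simp add: mult_ac)
  have "(A + B/4) * (1 + d * e) = A + B/4 + d*e*A + (d*e)*(B/4)" by (simp add: algebra_simps)
  also have "(d*e)*(B/4) \<le> 1 * (B/4)" using de A by (intro mult_right_mono) auto
  finally have "I powr b \<le> A + B/2 + d*e*A" using 1 by linarith
  hence "B / 2 \<le> 2 * K + mu + d * e * A" using low by linarith
  hence "B \<le> 2 * (2 * K + mu + d * e * A)" by (simp add: field_simps)
  thus ?thesis unfolding d_def e_def r_def by (simp add: mult_ac)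
qed

lemma young_t:
  fixes b b' w f t :: real
  assumes b: "b > 1" "b' > 1" "1/b + 1/b' = 1" and "w \<ge> 0" "f \<ge> 0" "t > 0"
  shows "w * f \<le> t powr b / b * w powr b + t powr (-b') / b' * f powr b'"
proof -
  have "w * f = (t * w) * (f / t)" using assms by simp
  also have "\<dots> \<le> (t * w) powr b / b + (f / t) powr b' / b'"
    using assms by (intro Youngs_inequality) auto
  also have "(t * w) powr b = t powr b * w powr b" using assms by (simp add: powr_mult)
  also have "(f / t) powr b' = f powr b' / t powr b'" using assms by (intro powr_divide)
  also have "\<dots> = t powr (-b') * f powr b'" by (simp add: powr_minus divide_inverse mult.commute)
  finally show ?thesis by (simp add: mult_ac)
qed

lemma h_bound:
  fixes x y1 \<gamma> :: real assumes "\<gamma> > 1" "y1 \<le> x"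
  shows "(1 + \<bar>x\<bar>) powr (-\<gamma>) \<le> (1 + \<bar>y1\<bar>) powr \<gamma> * (1 + x - y1) powr (-\<gamma>)"
proof -
  have le: "1 + x - y1 \<le> (1 + \<bar>y1\<bar>) * (1 + \<bar>x\<bar>)" by (simp add: algebra_simps) (smt (verit) abs_ge_zero mult_nonneg_nonneg)
  have "((1 + \<bar>y1\<bar>) * (1 + \<bar>x\<bar>)) powr (-\<gamma>) \<le> (1 + x - y1) powr (-\<gamma>)"
    using assms le by (intro powr_mono2') auto
  hence "(1 + \<bar>y1\<bar>) powr (-\<gamma>) * (1 + \<bar>x\<bar>) powr (-\<gamma>) \<le> (1 + x - y1) powr (-\<gamma>)"
    by (simp add: powr_mult)
  hence "(1 + \<bar>y1\<bar>) powr \<gamma> * ((1 + \<bar>y1\<bar>) powr (-\<gamma>) * (1 + \<bar>x\<bar>) powr (-\<gamma>)) \<le> (1 + \<bar>y1\<bar>) powr \<gamma> * (1 + x - y1) powr (-\<gamma>)"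
    by (intro mult_left_mono) auto
  moreover have "(1 + \<bar>y1\<bar>) powr \<gamma> * (1 + \<bar>y1\<bar>) powr (-\<gamma>) = 1"
    by (simp add: powr_minus)
  ultimately show ?thesis by (simp add: mult.assoc[symmetric])
qed

lemma g1:
  fixes x y y1 \<gamma> H q b :: real assumes "\<gamma> > 1" "y1 \<le> x" "x \<le> y" "H > 0" "b > 1"
  shows "gker H \<gamma> q x y powr b \<le> 1 + b * exp (b * H) * H * (1 + \<bar>y1\<bar>) powr \<gamma> * (1 + x - y1) powr (-\<gamma>)"
proof -
  define h where "h = H * (1 + \<bar>x\<bar>) powr (-\<gamma>)"
  have h0: "h \<ge> 0" unfolding h_def using assms by simp
  have "(1 + \<bar>x\<bar>) powr (-\<gamma>) \<le> 1 powr (-\<gamma>)" using assms by (intro powr_mono2') auto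
  hence hH: "h \<le> H" unfolding h_def using assms by (simp add: mult_left_le)
  have "gker H \<gamma> q x y = 1 + h" using assms unfolding gker_def h_def by simp
  hence "gker H \<gamma> q x y powr b \<le> exp (b * h)" using h0 assms by (simp add: powr_le_exp_aux)
  also have "\<dots> \<le> 1 + b * h * exp (b * h)" using exp_le_aux[of "b*h"] h0 assms by simp
  also have "\<dots> \<le> 1 + b * h * exp (b * H)" using hH h0 assms by (simp add: mult_left_mono)
  also have "b * h * exp (b * H) \<le> b * exp (b * H) * H * ((1 + \<bar>y1\<bar>) powr \<gamma> * (1 + x - y1) powr (-\<gamma>))"
    using h_bound[OF assms(1,2)] assms unfolding h_def
    by (simp add: mult_left_mono mult_ac)
  finally show ?thesis by (simp add: mult_ac)
qed

lemma g2:
  fixes x y \<gamma> H q b :: real assumes "y < x" "H > 0"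
  shows "gker H \<gamma> q x y powr b = H powr b * exp (b * (y - x) / q)"
  using assms unfolding gker_def by (simp add: powr_def ln_mult exp_add[symmetric] algebra_simps)

lemma lim1: "\<gamma> > (1::real) \<Longrightarrow> ((\<lambda>x. - ((1 + x - y1) powr (1-\<gamma>) / (\<gamma>-1))) \<longlongrightarrow> 0) at_top"
proof -
  assume g: "\<gamma> > 1"
  have "filterlim (\<lambda>x::real. (1 - y1) + x) at_top at_top"
    by (intro filterlim_tendsto_add_at_top[OF tendsto_const filterlim_ident])
  hence "((\<lambda>x. (1 + x - y1) powr (1-\<gamma>)) \<longlongrightarrow> 0) at_top"
    using g by (intro tendsto_neg_powr) (auto simp: algebra_simps)
  hence "((\<lambda>x. - ((1 + x - y1) powr (1-\<gamma>) / (\<gamma>-1))) \<longlongrightarrow> - (0 / (\<gamma>-1))) at_top"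
    using g by (intro tendsto_minus tendsto_divide) auto
  thus ?thesis by simp
qed
lemma lim2: "b > (0::real) \<Longrightarrow> q > 0 \<Longrightarrow> ((\<lambda>x. - (q/b) * exp (b * (y - x) / q)) \<longlongrightarrow> 0) at_top"
proof -
  assume a: "b > 0" "q > 0"
  have "filterlim (\<lambda>x::real. (- (b * y / q)) + (b / q) * x) at_top at_top"
    using a by (intro filterlim_tendsto_add_at_top[OF tendsto_const] filterlim_tendsto_pos_mult_at_top[OF tendsto_const] filterlim_ident) auto
  hence "filterlim (\<lambda>x::real. - ((- (b * y / q)) + (b / q) * x)) at_bot at_top"
    by (simp only: filterlim_uminus_at_top)
  moreover have "(\<lambda>x::real. - ((- (b * y / q)) + (b / q) * x)) = (\<lambda>x. b * (y - x) / q)"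
    by (rule ext) (simp add: diff_divide_distrib right_diff_distrib)
  ultimately have "filterlim (\<lambda>x::real. b * (y - x) / q) at_bot at_top" by simp
  hence "((\<lambda>x. exp (b * (y - x) / q)) \<longlongrightarrow> 0) at_top"
    by (rule filterlim_compose[OF exp_at_bot])
  hence "((\<lambda>x. - (q/b) * exp (b * (y - x) / q)) \<longlongrightarrow> - (q/b) * 0) at_top"
    by (intro tendsto_mult tendsto_const)
  thus ?thesis by simp
qed


lemma int_htilde:
  fixes y1 \<gamma> :: real assumes g: "\<gamma> > 1"
  shows "(\<integral>\<^sup>+x. ennreal ((1 + x - y1) powr (-\<gamma>)) * indicator {y1..} x \<partial>lborel) = ennreal (1/(\<gamma>-1))"
proof -
  have "(\<integral>\<^sup>+x. ennreal ((1 + x - y1) powr (-\<gamma>)) * indicator {y1..} x \<partial>lborel)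
      = ennreal (0 - (- ((1 + y1 - y1) powr (1-\<gamma>) / (\<gamma>-1))))"
  proof (rule nn_integral_FTC_atLeast[where F="\<lambda>x. - ((1 + x - y1) powr (1-\<gamma>) / (\<gamma>-1))" and T=0])
    show "(\<lambda>x. (1 + x - y1) powr (-\<gamma>)) \<in> borel_measurable borel" by measurable
    fix x assume x: "y1 \<le> x"
    have d: "DERIV (\<lambda>x. (1 + x - y1) powr (1-\<gamma>)) x :> (1-\<gamma>) * (1 + x - y1) powr (1-\<gamma> - of_nat 1) * 1"
      by (rule DERIV_fun_powr) (use x in \<open>auto intro!: derivative_eq_intros\<close>)
    have "DERIV (\<lambda>x. - ((1 + x - y1) powr (1-\<gamma>) / (\<gamma>-1))) x :> - ((1-\<gamma>) * (1 + x - y1) powr (1-\<gamma> - of_nat 1) * 1 / (\<gamma>-1))"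
      by (intro DERIV_minus DERIV_cdivide d)
    moreover have "- ((1-\<gamma>) * (1 + x - y1) powr (1-\<gamma> - of_nat 1) * 1 / (\<gamma>-1)) = (1 + x - y1) powr (-\<gamma>)"
    proof -
      have "(1-\<gamma>) * (1 + x - y1) powr (1-\<gamma> - of_nat 1) * 1 / (\<gamma>-1) = (- (\<gamma>-1)) * (1 + x - y1) powr (-\<gamma>) / (\<gamma>-1)"
        by simp
      also have "\<dots> = - ((1 + x - y1) powr (-\<gamma>))" using g by (simp only: mult_minus_left divide_minus_left) simp
      finally show ?thesis by simp
    qed
    ultimately show "((\<lambda>x. - ((1 + x - y1) powr (1-\<gamma>) / (\<gamma>-1))) has_real_derivative (1 + x - y1) powr (-\<gamma>)) (at x)"
      by simp
    show "0 \<le> (1 + x - y1) powr (-\<gamma>)" by simp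
  next
    show "((\<lambda>x. - ((1 + x - y1) powr (1-\<gamma>) / (\<gamma>-1))) \<longlongrightarrow> 0) at_top"
      using g by (rule lim1)
  qed
  thus ?thesis using g by simp
qed

lemma int_exp:
  fixes y b q :: real assumes "b > 0" "q > 0"
  shows "(\<integral>\<^sup>+x. ennreal (exp (b * (y - x) / q)) * indicator {y..} x \<partial>lborel) = ennreal (q/b)"
proof -
  have "(\<integral>\<^sup>+x. ennreal (exp (b * (y - x) / q)) * indicator {y..} x \<partial>lborel)
      = ennreal (0 - (- (q/b) * exp (b * (y - y) / q)))"
  proof (rule nn_integral_FTC_atLeast[where F="\<lambda>x. - (q/b) * exp (b * (y - x) / q)" and T=0])
    show "(\<lambda>x. exp (b * (y - x) / q)) \<in> borel_measurable borel" by measurable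
    fix x assume x: "y \<le> x"
    show "((\<lambda>x. - (q/b) * exp (b * (y - x) / q)) has_real_derivative exp (b * (y - x) / q)) (at x)"
      using assms by (auto intro!: derivative_eq_intros simp: field_simps)
    show "0 \<le> exp (b * (y - x) / q)" by simp
  next
    show "((\<lambda>x. - (q/b) * exp (b * (y - x) / q)) \<longlongrightarrow> 0) at_top"
      using assms by (rule lim2)
  qed
  thus ?thesis by simp
qed

lemma gker_nonneg: "H > 0 \<Longrightarrow> gker H \<gamma> q x y \<ge> 0"
  unfolding gker_def by (simp add: add_nonneg_nonneg)

lemma YL:
  fixes y1 H b b' \<gamma> q s y t1 t2 :: real and \<phi>0 :: "real \<Rightarrow> real"
  assumes par: "H > 0" "b > 1" "b' > 1" "1/b + 1/b' = 1" "\<gamma> > 1" "q > 0"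
  and \<phi>: "\<phi>0 \<in> borel_measurable borel" "\<And>x. \<phi>0 x \<ge> 0" "\<And>x. x < y1 \<Longrightarrow> \<phi>0 x = 0"
  and sy: "y1 \<le> s" "s \<le> y" and t: "t1 > 0" "t2 > 0"
  defines "K \<equiv> 1 + b * exp (b * H) * H * (1 + \<bar>y1\<bar>) powr \<gamma> /(\<gamma>-1) + H powr b * q / b"
  shows "(\<integral>\<^sup>+x. ennreal (gker H \<gamma> q x y * \<phi>0 x) \<partial>lborel) \<le>
     ennreal (t1 powr b / b * (s - y1 + K) + t2 powr b / b * (y - s + K))
   + ennreal (t1 powr (-b') / b') * (\<integral>\<^sup>+x. ennreal (\<phi>0 x powr b') * indicator {y1..s} x \<partial>lborel)
   + ennreal (t2 powr (-b') / b') * (\<integral>\<^sup>+x. ennreal (\<phi>0 x powr b') * indicator {s<..} x \<partial>lborel)"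
proof -
  note [measurable] = \<phi>(1)
  define cc where "cc = b * exp (b * H) * H * (1 + \<bar>y1\<bar>) powr \<gamma>"
  have K_def': "K = 1 + cc/(\<gamma>-1) + H powr b * q / b" unfolding K_def cc_def by simp
  define ht where "ht x = (1 + x - y1) powr (-\<gamma>)" for x
  define W1 where "W1 x = (1 + cc * ht x) * indicator {y1..s} x" for x
  define W2 where "W2 x = (1 + cc * ht x) * indicator {s<..y} x + H powr b * exp (b*(y-x)/q) * indicator {y..} x" for x
  define P1 where "P1 x = \<phi>0 x powr b' * indicator {y1..s} x" for x
  define P2 where "P2 x = \<phi>0 x powr b' * indicator {s<..} x" for x
  define a1 where "a1 = t1 powr b / b"
  define a2 where "a2 = t2 powr b / b"
  define c1 where "c1 = t1 powr (-b') / b'"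
  define c2 where "c2 = t2 powr (-b') / b'"
  have cc0: "cc \<ge> 0" unfolding cc_def using par by simp
  have ht0: "ht x \<ge> 0" for x unfolding ht_def by simp
  have W10: "W1 x \<ge> 0" for x unfolding W1_def using cc0 ht0 by simp
  have W20: "W2 x \<ge> 0" for x unfolding W2_def using cc0 ht0 by (simp add: add_nonneg_nonneg)
  have P10: "P1 x \<ge> 0" for x unfolding P1_def by simp
  have P20: "P2 x \<ge> 0" for x unfolding P2_def by simp
  have a0: "a1 \<ge> 0" "a2 \<ge> 0" "c1 \<ge> 0" "c2 \<ge> 0" unfolding a1_def a2_def c1_def c2_def using par by auto
  have pw: "gker H \<gamma> q x y * \<phi>0 x \<le> a1 * W1 x + a2 * W2 x + c1 * P1 x + c2 * P2 x" for x
  proof -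
    have R0: "0 \<le> a1 * W1 x" "0 \<le> a2 * W2 x" "0 \<le> c1 * P1 x" "0 \<le> c2 * P2 x"
      using a0 W10 W20 P10 P20 by auto
    consider "x < y1" | "y1 \<le> x" "x \<le> s" | "s < x" by linarith
    thus ?thesis
    proof cases
      case 1 thus ?thesis using \<phi>(3) R0 by simp
    next
      case 2
      have Y: "gker H \<gamma> q x y * \<phi>0 x \<le> a1 * gker H \<gamma> q x y powr b + c1 * \<phi>0 x powr b'"
        unfolding a1_def c1_def using young_t[OF par(2-4) gker_nonneg[OF par(1)] \<phi>(2) t(1)] by simp
      have "gker H \<gamma> q x y powr b \<le> 1 + cc * ht x"
        using g1[of \<gamma> y1 x y H b q] 2 sy par unfolding ht_def cc_def by simp
      moreover have "W1 x = 1 + cc * ht x" unfolding W1_def using 2 by simp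
      ultimately have "gker H \<gamma> q x y powr b \<le> W1 x" by simp
      hence "a1 * gker H \<gamma> q x y powr b \<le> a1 * W1 x" using a0 by (intro mult_left_mono) auto
      moreover have "\<phi>0 x powr b' = P1 x" unfolding P1_def using 2 by simp
      ultimately show ?thesis using R0 Y by (simp only:)
    next
      case 3
      have Y: "gker H \<gamma> q x y * \<phi>0 x \<le> a2 * gker H \<gamma> q x y powr b + c2 * \<phi>0 x powr b'"
        unfolding a2_def c2_def using young_t[OF par(2-4) gker_nonneg[OF par(1)] \<phi>(2) t(2)] by simp
      have "gker H \<gamma> q x y powr b \<le> W2 x"
      proof (cases "x \<le> y")
        case True
        have "gker H \<gamma> q x y powr b \<le> 1 + cc * ht x"
          using g1[of \<gamma> y1 x y H b q] True 3 sy par unfolding ht_def cc_def by simp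
        moreover have "W2 x = 1 + cc * ht x + H powr b * exp (b*(y-x)/q) * indicator {y..} x"
          unfolding W2_def using True 3 by simp
        moreover have "0 \<le> H powr b * exp (b*(y-x)/q) * indicator {y..} x" by simp
        ultimately show ?thesis by linarith
      next
        case False
        have "gker H \<gamma> q x y powr b = H powr b * exp (b * (y - x) / q)"
          using g2[of y x H \<gamma> q b] False par by simp
        moreover have "W2 x = H powr b * exp (b*(y-x)/q)"
          unfolding W2_def using False by simp
        ultimately show ?thesis by simp
      qed
      hence "a2 * gker H \<gamma> q x y powr b \<le> a2 * W2 x" using a0 by (intro mult_left_mono) auto
      moreover have "\<phi>0 x powr b' = P2 x" unfolding P2_def using 3 by simp
      ultimately show ?thesis using R0 Y by (simp only:)
    qed
  qed
  have e1: "ennreal cc * ennreal (1/(\<gamma>-1)) = ennreal (cc/(\<gamma>-1))"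
    using ennreal_mult[of cc "1/(\<gamma>-1)"] cc0 par by simp
  have e2: "ennreal (H powr b) * ennreal (q/b) = ennreal (H powr b * q / b)"
    using ennreal_mult[of "H powr b" "q/b"] par by simp
  have mW1[measurable]: "W1 \<in> borel_measurable lborel" unfolding W1_def ht_def by measurable
  have mW2[measurable]: "W2 \<in> borel_measurable lborel" unfolding W2_def ht_def by measurable
  have mP1[measurable]: "P1 \<in> borel_measurable lborel" unfolding P1_def by measurable
  have mP2[measurable]: "P2 \<in> borel_measurable lborel" unfolding P2_def by measurable
  have "(\<integral>\<^sup>+x. ennreal (gker H \<gamma> q x y * \<phi>0 x) \<partial>lborel) \<le>
        (\<integral>\<^sup>+x. ennreal (a1 * W1 x + a2 * W2 x + c1 * P1 x + c2 * P2 x) \<partial>lborel)"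
    using pw by (intro nn_integral_mono ennreal_leI) auto
  also have "\<dots> = (\<integral>\<^sup>+x. ennreal a1 * ennreal (W1 x) + ennreal a2 * ennreal (W2 x) + ennreal c1 * ennreal (P1 x) + ennreal c2 * ennreal (P2 x) \<partial>lborel)"
    using a0 W10 W20 P10 P20 by (intro nn_integral_cong) (simp add: ennreal_plus ennreal_mult add_nonneg_nonneg)
  also have "\<dots> = ennreal a1 * (\<integral>\<^sup>+x. ennreal (W1 x) \<partial>lborel) + ennreal a2 * (\<integral>\<^sup>+x. ennreal (W2 x) \<partial>lborel)
     + ennreal c1 * (\<integral>\<^sup>+x. ennreal (P1 x) \<partial>lborel) + ennreal c2 * (\<integral>\<^sup>+x. ennreal (P2 x) \<partial>lborel)"
    by (simp add: nn_integral_add nn_integral_cmult)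
  also have "(\<integral>\<^sup>+x. ennreal (P1 x) \<partial>lborel) = (\<integral>\<^sup>+x. ennreal (\<phi>0 x powr b') * indicator {y1..s} x \<partial>lborel)"
    unfolding P1_def by (intro nn_integral_cong) (simp split: split_indicator)
  also have "(\<integral>\<^sup>+x. ennreal (P2 x) \<partial>lborel) = (\<integral>\<^sup>+x. ennreal (\<phi>0 x powr b') * indicator {s<..} x \<partial>lborel)"
    unfolding P2_def by (intro nn_integral_cong) (simp split: split_indicator)
  finally have MAIN: "(\<integral>\<^sup>+x. ennreal (gker H \<gamma> q x y * \<phi>0 x) \<partial>lborel) \<le> ennreal a1 * (\<integral>\<^sup>+x. ennreal (W1 x) \<partial>lborel) + ennreal a2 * (\<integral>\<^sup>+x. ennreal (W2 x) \<partial>lborel)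
     + ennreal c1 * (\<integral>\<^sup>+x. ennreal (\<phi>0 x powr b') * indicator {y1..s} x \<partial>lborel) + ennreal c2 * (\<integral>\<^sup>+x. ennreal (\<phi>0 x powr b') * indicator {s<..} x \<partial>lborel)" .
  have X1: "(\<integral>\<^sup>+x. ennreal (W1 x) \<partial>lborel) \<le> ennreal (s - y1 + K)"
  proof -
    have "(\<integral>\<^sup>+x. ennreal (W1 x) \<partial>lborel) = (\<integral>\<^sup>+x. indicator {y1..s} x + ennreal cc * (ennreal (ht x) * indicator {y1..s} x) \<partial>lborel)"
      unfolding W1_def using cc0 ht0 by (intro nn_integral_cong) (simp add: ennreal_plus ennreal_mult split: split_indicator)
    also have "\<dots> = emeasure lborel {y1..s} + ennreal cc * (\<integral>\<^sup>+x. ennreal (ht x) * indicator {y1..s} x \<partial>lborel)"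
      unfolding ht_def by (simp add: nn_integral_add nn_integral_cmult)
    also have "(\<integral>\<^sup>+x. ennreal (ht x) * indicator {y1..s} x \<partial>lborel) \<le> (\<integral>\<^sup>+x. ennreal (ht x) * indicator {y1..} x \<partial>lborel)"
      by (intro nn_integral_mono mult_left_mono) (auto split: split_indicator)
    also have "\<dots> = ennreal (1/(\<gamma>-1))" unfolding ht_def using int_htilde[OF par(5)] by simp
    also have "emeasure lborel {y1..s} = ennreal (s - y1)" using sy by simp
    also have "ennreal (s - y1) + ennreal cc * ennreal (1/(\<gamma>-1)) = ennreal (s - y1 + cc * (1/(\<gamma>-1)))"
      using sy cc0 par by (simp add: ennreal_plus e1 e2)
    also have "\<dots> \<le> ennreal (s - y1 + K)" unfolding K_def' using par by (intro ennreal_leI) simp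
    finally show ?thesis by (simp add: mult_left_mono add_mono)
  qed
  have X2: "(\<integral>\<^sup>+x. ennreal (W2 x) \<partial>lborel) \<le> ennreal (y - s + K)"
  proof -
    have "(\<integral>\<^sup>+x. ennreal (W2 x) \<partial>lborel) = (\<integral>\<^sup>+x. indicator {s<..y} x + ennreal cc * (ennreal (ht x) * indicator {s<..y} x)
            + ennreal (H powr b) * (ennreal (exp (b*(y-x)/q)) * indicator {y..} x) \<partial>lborel)"
      unfolding W2_def using cc0 ht0 by (intro nn_integral_cong) (simp add: ennreal_plus ennreal_mult split: split_indicator)
    also have "\<dots> = emeasure lborel {s<..y} + ennreal cc * (\<integral>\<^sup>+x. ennreal (ht x) * indicator {s<..y} x \<partial>lborel)
         + ennreal (H powr b) * (\<integral>\<^sup>+x. ennreal (exp (b*(y-x)/q)) * indicator {y..} x \<partial>lborel)"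
      unfolding ht_def by (simp add: nn_integral_add nn_integral_cmult)
    also have "(\<integral>\<^sup>+x. ennreal (ht x) * indicator {s<..y} x \<partial>lborel) \<le> (\<integral>\<^sup>+x. ennreal (ht x) * indicator {y1..} x \<partial>lborel)"
      using sy by (intro nn_integral_mono mult_left_mono) (auto split: split_indicator)
    also have "\<dots> = ennreal (1/(\<gamma>-1))" unfolding ht_def using int_htilde[OF par(5)] by simp
    also have "(\<integral>\<^sup>+x. ennreal (exp (b*(y-x)/q)) * indicator {y..} x \<partial>lborel) = ennreal (q/b)"
      using int_exp[of b q y] par by simp
    also have "emeasure lborel {s<..y} = ennreal (y - s)" using sy by simp
    also have "ennreal (y - s) + ennreal cc * ennreal (1/(\<gamma>-1)) + ennreal (H powr b) * ennreal (q/b)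
        = ennreal (y - s + cc * (1/(\<gamma>-1)) + H powr b * (q / b))"
      using sy cc0 par by (simp add: ennreal_plus e1 e2)
    also have "\<dots> \<le> ennreal (y - s + K)" unfolding K_def' using par by (intro ennreal_leI) simp
    finally show ?thesis by (simp add: mult_left_mono add_mono)
  qed
  have X3: "ennreal a1 * ennreal (s - y1 + K) + ennreal a2 * ennreal (y - s + K) = 
       ennreal (t1 powr b / b * (s - y1 + K) + t2 powr b / b * (y - s + K))"
  proof -
    have K0: "K \<ge> 0" unfolding K_def' using cc0 par by (simp add: add_nonneg_nonneg)
    have A1: "ennreal a1 * ennreal (s-y1+K) = ennreal (a1*(s-y1+K))"
      by (rule ennreal_mult[symmetric]) (use a0 sy K0 in auto)
    have A2: "ennreal a2 * ennreal (y-s+K) = ennreal (a2*(y-s+K))"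
      by (rule ennreal_mult[symmetric]) (use a0 sy K0 in auto)
    have A3: "ennreal (a1*(s-y1+K)) + ennreal (a2*(y-s+K)) = ennreal (a1*(s-y1+K) + a2*(y-s+K))"
      by (rule ennreal_plus[symmetric]) (use a0 sy K0 in auto)
    show ?thesis unfolding a1_def[symmetric] a2_def[symmetric] A1 A2 A3 ..
  qed
  have "ennreal a1 * (\<integral>\<^sup>+x. ennreal (W1 x) \<partial>lborel) + ennreal a2 * (\<integral>\<^sup>+x. ennreal (W2 x) \<partial>lborel)
     \<le> ennreal a1 * ennreal (s - y1 + K) + ennreal a2 * ennreal (y - s + K)"
    using X1 X2 by (intro add_mono mult_left_mono) auto
  hence "ennreal a1 * (\<integral>\<^sup>+x. ennreal (W1 x) \<partial>lborel) + ennreal a2 * (\<integral>\<^sup>+x. ennreal (W2 x) \<partial>lborel)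
     + ennreal c1 * (\<integral>\<^sup>+x. ennreal (\<phi>0 x powr b') * indicator {y1..s} x \<partial>lborel) + ennreal c2 * (\<integral>\<^sup>+x. ennreal (\<phi>0 x powr b') * indicator {s<..} x \<partial>lborel)
     \<le> ennreal (t1 powr b / b * (s - y1 + K) + t2 powr b / b * (y - s + K))
     + ennreal c1 * (\<integral>\<^sup>+x. ennreal (\<phi>0 x powr b') * indicator {y1..s} x \<partial>lborel) + ennreal c2 * (\<integral>\<^sup>+x. ennreal (\<phi>0 x powr b') * indicator {s<..} x \<partial>lborel)"
    unfolding X3 by (intro add_right_mono)
  with MAIN show ?thesis unfolding c1_def c2_def by (rule order_trans)
qed

lemma core:
  fixes I m u :: "real \<Rightarrow> real" and y1 b b' K :: real
  assumes b: "b > 1" "b' > 1" "1/b + 1/b' = 1" and K: "K \<ge> 1"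
  and HY: "\<And>s y t1 t2. y1 \<le> s \<Longrightarrow> s \<le> y \<Longrightarrow> t1 > 0 \<Longrightarrow> t2 > 0 \<Longrightarrow>
     I y \<le> t1 powr b * (s - y1 + K) / b + t1 powr (-b') * m s / b' + t2 powr b * (y - s + K) / b + t2 powr (-b') * u s / b'"
  and Hm: "\<And>s. y1 \<le> s \<Longrightarrow> m s \<ge> 0 \<and> u s \<ge> 0 \<and> m s + u s \<le> 1"
  and HI: "\<And>y. I y \<ge> 0"
  defines "cU \<equiv> 2 / ((b - 1) * (1 - 2 powr (-b')))"
  and "r \<equiv> 4 powr (b'/b)" and "d \<equiv> (b-1) * exp (b-1)"
  shows coreA: "\<And>y. y1 \<le> y \<Longrightarrow> I y powr b - (y - y1) \<le> 2 * K"
    and coreB: "\<And>mu s y. mu \<ge> 0 \<Longrightarrow> y1 + (2 + (1 + d) * r * cU) * (K + mu + 2 powr b * K) \<le> s \<Longrightarrow> s \<le> y \<Longrightarrow>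
        I s powr b - (s - y1) \<ge> - mu \<Longrightarrow> I y powr b - (y - y1) \<ge> - mu \<Longrightarrow>
        y - s \<le> 2 * (2 * K + mu + d * r * cU * (K + mu + 2 powr b * K))"
proof -
  fix y assume y: "y1 \<le> y"
  have "I y powr b \<le> (y - y1 + K) + K"
    by (rule claimA[OF b _ _ _ _ _ _ HI, of "y - y1 + K" K "m y" "u y"])
       (use y K Hm[OF y] HY[OF y order_refl] in auto)
  thus "I y powr b - (y - y1) \<le> 2 * K" by simp
next
  fix mu s y assume mu: "mu \<ge> 0" and thr: "y1 + (2 + (1 + d) * r * cU) * (K + mu + 2 powr b * K) \<le> s"
    and sy: "s \<le> y" and ls: "I s powr b - (s - y1) \<ge> - mu" and ly: "I y powr b - (y - y1) \<ge> - mu"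
  define N where "N = K + mu + 2 powr b * K"
  define A where "A = s - y1 + K"
  have c0: "2 powr (-b') < 2 powr 0" using b by (intro powr_less_mono) auto
  have cU0: "cU > 0" unfolding cU_def using b c0 by auto
  have r0: "r > 0" unfolding r_def by simp
  have d0: "d \<ge> 0" unfolding d_def using b by simp
  have pb: "2 powr b * K \<ge> 0" using K by simp
  have N0: "N \<ge> 1" unfolding N_def using K mu pb by linarith
  define Q where "Q = (2 + (1 + d) * r * cU) * N"
  define p1 where "p1 = r * cU * N"
  define p2 where "p2 = d * r * cU * N"
  have XN: "Q = 2 * N + p1 + p2" unfolding Q_def p1_def p2_def by (simp add: algebra_simps)
  have P1: "p1 \<ge> 0" unfolding p1_def using r0 cU0 N0 by simp
  have P2: "p2 \<ge> 0" unfolding p2_def using r0 cU0 N0 d0 by simp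
  have thrN: "y1 + Q \<le> s" using thr unfolding N_def Q_def .
  have NK: "N \<ge> K + mu" using pb unfolding N_def by linarith
  have thr': "Q \<le> A" using thrN K unfolding A_def by linarith
  have A0: "A > 0" using thr' XN P1 P2 N0 by linarith
  have s1: "y1 \<le> s" using thrN XN P1 P2 N0 by linarith
  have A2: "A \<ge> 2 * (K + mu)" using thr' XN P1 P2 NK unfolding distrib_left by linarith
  have uU: "u s \<le> 2 * (K + mu + 2 powr b * K) / ((b - 1) * (1 - 2 powr (-b')) * A)"
    by (rule claimU[OF b A0 _ mu A2 _ _ _ HI[of s], of "m s"])
       (use K Hm[OF s1] HY[OF s1 order_refl] ls in \<open>auto simp: A_def\<close>)
  define U where "U = cU * N / A"
  have uU': "u s \<le> U" using uU unfolding U_def cU_def N_def by (simp add: field_simps)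
  have rcN: "r * cU * N \<le> A" using thr' XN P1 P2 N0 unfolding p1_def[symmetric] by linarith
  have drcN: "d * r * cU * N \<le> A" using thr' XN P1 P2 N0 unfolding p2_def[symmetric] by linarith
  have U1: "4 powr (b'/b) * U \<le> 1" unfolding r_def[symmetric] U_def using rcN A0
    by (simp add: field_simps)
  have U2: "(b-1) * exp (b-1) * (4 powr (b'/b) * U) \<le> 1" unfolding r_def[symmetric] d_def[symmetric] U_def
    using drcN A0 by (simp add: field_simps)
  have "y - s + K \<le> 2 * (2 * K + mu + (b-1) * exp (b-1) * (4 powr (b'/b) * U) * A)"
    by (rule claimY[where B="y - s + K" and K=K and m="m s" and u="u s" and I="I y", OF b A0 _ _ mu _ _ _ uU' HI[of y] U1 U2])
       (use K sy Hm[OF s1] HY[OF s1 sy] ly in \<open>auto simp: A_def\<close>)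
  moreover have "(b-1) * exp (b-1) * (4 powr (b'/b) * U) * A = d * r * cU * N"
    unfolding d_def[symmetric] r_def[symmetric] U_def using A0 by (simp add: field_simps)
  ultimately show "y - s \<le> 2 * (2 * K + mu + d * r * cU * (K + mu + 2 powr b * K))"
    unfolding N_def using K by simp
qed

lemma final_sum:
  fixes lam Thr Dist :: "real \<Rightarrow> real" and y1 K Z :: real
  assumes A: "\<And>y. y1 \<le> y \<Longrightarrow> lam y \<le> 2 * K" and K: "K \<ge> 0"
  and B: "\<And>mu s y. mu \<ge> 0 \<Longrightarrow> y1 + Thr mu \<le> s \<Longrightarrow> s \<le> y \<Longrightarrow> lam s \<ge> - mu \<Longrightarrow> lam y \<ge> - mu \<Longrightarrow> y - s \<le> Dist mu"
  and T0: "\<And>mu. mu \<ge> 0 \<Longrightarrow> Thr mu \<ge> 0" and D0: "\<And>mu. mu \<ge> 0 \<Longrightarrow> Dist mu \<ge> 0"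
  and G: "\<And>n::nat. Thr n + 2 * Dist n \<le> Z * (real n + 1)"
  shows "(\<integral>\<^sup>+ y. ennreal (exp (lam y - y1)) * indicator {y1..} y \<partial>lborel) \<le> ennreal (exp (2*K+1-y1) * Z * 2 / (1 - exp (-1/2)))"
proof -
  define E0 where "E0 = exp (2*K+1-y1)"
  define ok where "ok n s \<longleftrightarrow> y1 + Thr (real n) \<le> s \<and> lam s \<ge> - real n" for n :: nat and s
  define cn where "cn n = (if \<exists>s. ok n s then SOME s. ok n s else y1)" for n
  define J where "J n = {y1 .. y1 + Thr (real n)} \<union> {cn n - Dist (real n) .. cn n + Dist (real n)}" for n
  have Jm[measurable]: "J n \<in> sets lborel" for n unfolding J_def by simp
  have mem: "y \<in> J n" if y: "y1 \<le> y" and l: "lam y \<ge> - real n" for y n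
  proof (cases "y \<le> y1 + Thr (real n)")
    case True thus ?thesis unfolding J_def using y by auto
  next
    case False
    hence oky: "ok n y" unfolding ok_def using l by auto
    hence ex: "\<exists>s. ok n s" by blast
    hence okc: "ok n (cn n)" unfolding cn_def using someI_ex[OF ex] by simp
    have "\<bar>y - cn n\<bar> \<le> Dist (real n)"
    proof (cases "cn n \<le> y")
      case True thus ?thesis using B[of "real n" "cn n" y] okc l unfolding ok_def by auto
    next
      case False thus ?thesis using B[of "real n" y "cn n"] okc oky unfolding ok_def by auto
    qed
    thus ?thesis unfolding J_def by (auto simp: abs_le_iff)
  qed
  have pw: "ennreal (exp (lam y - y1)) * indicator {y1..} y \<le> (\<Sum>n. ennreal (E0 * exp (- real n)) * indicator (J n) y)" for y
  proof (cases "y1 \<le> y")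
    case False thus ?thesis by simp
  next
    case True
    define n where "n = nat \<lceil>- lam y\<rceil>"
    have l1: "lam y \<ge> - real n" unfolding n_def by linarith
    have l2: "lam y \<le> 2*K + 1 - real n"
    proof (cases "- lam y \<le> 0")
      case True thus ?thesis unfolding n_def using A[OF \<open>y1 \<le> y\<close>] K by simp
    next
      case False thus ?thesis unfolding n_def using K by linarith
    qed
    have "exp (lam y - y1) \<le> E0 * exp (- real n)"
      unfolding E0_def mult_exp_exp using l2 by simp
    hence "ennreal (exp (lam y - y1)) * indicator {y1..} y \<le> ennreal (E0 * exp (- real n)) * indicator (J n) y"
      using True mem[OF True l1] by (simp add: ennreal_leI)
    also have "\<dots> = (\<Sum>i\<in>{n}. ennreal (E0 * exp (- real i)) * indicator (J i) y)" by (simp only: sum.insert[OF finite.emptyI emptyE[of n False, THEN notI]] sum.empty add_0_right)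
    also have "\<dots> \<le> (\<Sum>i. ennreal (E0 * exp (- real i)) * indicator (J i) y)"
      by (rule sum_le_suminf[OF summableI]) auto
    finally show ?thesis .
  qed
  have "(\<integral>\<^sup>+ y. ennreal (exp (lam y - y1)) * indicator {y1..} y \<partial>lborel) \<le> (\<integral>\<^sup>+ y. (\<Sum>n. ennreal (E0 * exp (- real n)) * indicator (J n) y) \<partial>lborel)"
    by (intro nn_integral_mono pw)
  also have "\<dots> = (\<Sum>n. ennreal (E0 * exp (- real n)) * emeasure lborel (J n))"
    by (subst nn_integral_suminf) (measurable, simp only: nn_integral_cmult_indicator[OF Jm])
  also have "\<dots> \<le> (\<Sum>n. ennreal (E0 * Z * 2 * exp (-1/2) ^ n))"
  proof (intro suminf_le summableI)
    fix n :: nat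
    have Z0: "Z \<ge> 0" using G[of 0] T0[of 0] D0[of 0] by simp
    have "emeasure lborel (J n) \<le> emeasure lborel {y1 .. y1 + Thr (real n)} + emeasure lborel {cn n - Dist (real n) .. cn n + Dist (real n)}"
      unfolding J_def by (rule emeasure_subadditive) auto
    also have "\<dots> = ennreal (Thr n + 2 * Dist n)"
      using T0[of n] D0[of n] by (simp add: ennreal_plus[symmetric] del: ennreal_plus)
    also have "\<dots> \<le> ennreal (Z * (real n + 1))" using G[of n] by (intro ennreal_leI)
    finally have em: "emeasure lborel (J n) \<le> ennreal (Z * (real n + 1))" .
    have "exp (real n / 2) \<ge> 1 + real n / 2" by (rule exp_ge_add_one_self)
    hence "real n + 1 \<le> 2 * exp (real n / 2)" by linarith
    hence "exp (- real n) * (real n + 1) \<le> exp (- real n) * (2 * exp (real n / 2))"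
      by (intro mult_left_mono) auto
    also have "\<dots> = 2 * exp (-1/2) ^ n"
      by (simp add: exp_of_nat_mult[symmetric] mult_exp_exp)
    finally have ee: "exp (- real n) * (real n + 1) \<le> 2 * exp (-1/2) ^ n" .
    have "ennreal (E0 * exp (- real n)) * emeasure lborel (J n) \<le> ennreal (E0 * exp (- real n)) * ennreal (Z * (real n + 1))"
      by (intro mult_left_mono em) auto
    also have "\<dots> = ennreal (E0 * Z * (exp (- real n) * (real n + 1)))"
      using Z0 by (simp add: ennreal_mult[symmetric] E0_def mult_ac)
    also have "\<dots> \<le> ennreal (E0 * Z * (2 * exp (-1/2) ^ n))"
      using ee Z0 by (intro ennreal_leI mult_left_mono) (auto simp: E0_def)
    finally show "ennreal (E0 * exp (- real n)) * emeasure lborel (J n) \<le> ennreal (E0 * Z * 2 * exp (-1/2) ^ n)"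
      by (simp add: mult_ac)
  qed
  also have "\<dots> = ennreal (\<Sum>n. E0 * Z * 2 * exp (-1/2) ^ n)"
  proof (rule suminf_ennreal2)
    have Z0: "Z \<ge> 0" using G[of 0] T0[of 0] D0[of 0] by simp
    show "0 \<le> E0 * Z * 2 * exp (-1/2) ^ n" for n using Z0 by (simp add: E0_def)
    show "summable (\<lambda>n. E0 * Z * 2 * exp (-1/2) ^ n)"
      by (intro summable_mult summable_geometric) simp
  qed
  also have "(\<Sum>n. E0 * Z * 2 * exp (-1/2) ^ n) = E0 * Z * 2 * (1 / (1 - exp (-1/2)))"
    by (subst suminf_mult) (auto intro!: summable_geometric simp: suminf_geometric)
  finally show ?thesis unfolding E0_def by simp
qed

theorem lemma3:
  fixes y1 H \<beta> \<beta>' \<gamma> q :: real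
  assumes "H > 0" and "\<beta> > 1" and "\<gamma> > 1" and "q > 0"
    and "1 / \<beta> + 1 / \<beta>' = 1"
  shows "\<exists>C::real. \<forall>\<phi> :: real \<Rightarrow> real.
           set_borel_measurable lborel {y1..} \<phi> \<longrightarrow>
           (\<forall>x \<ge> y1. \<phi> x \<ge> 0) \<longrightarrow>
           (\<integral>\<^sup>+ x \<in> {y1..}. ennreal (\<phi> x powr \<beta>') \<partial>lborel) \<le> 1 \<longrightarrow>
           (\<integral>\<^sup>+ y \<in> {y1..}. ennreal (exp (- Ffun y1 H \<beta> \<gamma> q \<phi> y)) \<partial>lborel) \<le> ennreal C"
proof -
  note par = assms
  have b'0: "\<beta>' \<noteq> 0" using assms by auto
  have "1 / \<beta>' = 1 - 1 / \<beta>" using assms by simp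
  moreover have "1 / \<beta> < 1" "0 < 1 / \<beta>" using assms by auto
  ultimately have "0 < 1 / \<beta>'" "1 / \<beta>' < 1" by linarith+
  hence b': "\<beta>' > 1" by (simp add: divide_less_eq split: if_splits)
  have bb: "\<beta> > 1" "\<beta>' > 1" "1/\<beta> + 1/\<beta>' = 1" using assms b' by auto
  define K where "K = 1 + \<beta> * exp (\<beta> * H) * H * (1 + \<bar>y1\<bar>) powr \<gamma> /(\<gamma>-1) + H powr \<beta> * q / \<beta>"
  have K1: "K \<ge> 1" unfolding K_def using assms by (simp add: add_nonneg_nonneg)
  define cU where "cU = 2 / ((\<beta> - 1) * (1 - 2 powr (-\<beta>')))"
  define r where "r = 4 powr (\<beta>'/\<beta>)"
  define d where "d = (\<beta>-1) * exp (\<beta>-1)"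
  have c0: "2 powr (-\<beta>') < 2 powr 0" using b' by (intro powr_less_mono) auto
  have cU0: "cU > 0" unfolding cU_def using assms c0 by auto
  have r0: "r > 0" unfolding r_def by simp
  have d0: "d \<ge> 0" unfolding d_def using assms by simp
  define c where "c = 2 + (1 + d) * r * cU"
  define k where "k = d * r * cU"
  define K' where "K' = K * (1 + 2 powr \<beta>)"
  have c00: "c \<ge> 0" "k \<ge> 0" "K' \<ge> 0" unfolding c_def k_def K'_def using d0 r0 cU0 K1 by auto
  define Thr where "Thr mu = (2 + (1 + d) * r * cU) * (K + mu + 2 powr \<beta> * K)" for mu
  define Dist where "Dist mu = 2 * (2 * K + mu + d * r * cU * (K + mu + 2 powr \<beta> * K))" for mu
  define Z where "Z = (c + 4 * k + 4) * (1 + K') + 8 * K"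
  define C where "C = exp (2*K+1-y1) * Z * 2 / (1 - exp (-1/2))"
  have T0: "Thr mu \<ge> 0" if "mu \<ge> 0" for mu
    unfolding Thr_def using that d0 r0 cU0 K1 by (intro mult_nonneg_nonneg add_nonneg_nonneg) auto
  have D0: "Dist mu \<ge> 0" if "mu \<ge> 0" for mu
    unfolding Dist_def using that d0 r0 cU0 K1 by (intro mult_nonneg_nonneg add_nonneg_nonneg) auto
  have G: "Thr n + 2 * Dist n \<le> Z * (real n + 1)" for n :: nat
  proof -
    define N where "N = real n + K'"
    have "Thr n + 2 * Dist n = (c + 4 * k) * N + 4 * real n + 8 * K"
      unfolding Thr_def Dist_def N_def c_def k_def K'_def by (simp add: algebra_simps)
    also have "N \<le> (1 + K') * (real n + 1)" unfolding N_def using c00 by (simp add: algebra_simps)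
    hence "(c + 4 * k) * N \<le> (c + 4 * k) * ((1 + K') * (real n + 1))" using c00 by (intro mult_left_mono) auto
    hence "(c + 4 * k) * N + 4 * real n + 8 * K \<le> (c + 4 * k) * ((1 + K') * (real n + 1)) + 4 * ((1 + K') * (real n + 1)) + 8 * K * (real n + 1)"
    proof -
      assume h: "(c + 4 * k) * N \<le> (c + 4 * k) * ((1 + K') * (real n + 1))"
      have "4 * real n \<le> 4 * ((1 + K') * (real n + 1))" using c00 by (simp add: algebra_simps)
      moreover have "8 * K \<le> 8 * K * (real n + 1)" using K1 by simp
      ultimately show ?thesis using h by linarith
    qed
    also have "\<dots> = Z * (real n + 1)" unfolding Z_def by (simp add: algebra_simps)
    finally show ?thesis .
  qed
  show ?thesis
  proof (intro exI[of _ C] allI impI)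
    fix \<phi> :: "real \<Rightarrow> real"
    assume meas: "set_borel_measurable lborel {y1..} \<phi>" and nonneg: "\<forall>x \<ge> y1. \<phi> x \<ge> 0"
      and norm: "(\<integral>\<^sup>+ x \<in> {y1..}. ennreal (\<phi> x powr \<beta>') \<partial>lborel) \<le> 1"
    define \<phi>0 where "\<phi>0 x = indicator {y1..} x * \<phi> x" for x
    have m0: "\<phi>0 \<in> borel_measurable borel"
      using meas unfolding set_borel_measurable_def \<phi>0_def by simp
    note [measurable] = m0
    have p0: "\<phi>0 x \<ge> 0" for x unfolding \<phi>0_def using nonneg by (simp split: split_indicator)
    have z0: "\<phi>0 x = 0" if "x < y1" for x unfolding \<phi>0_def using that by simp
    define M1 where "M1 s = (\<integral>\<^sup>+x. ennreal (\<phi>0 x powr \<beta>') * indicator {y1..s} x \<partial>lborel)" for s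
    define M2 where "M2 s = (\<integral>\<^sup>+x. ennreal (\<phi>0 x powr \<beta>') * indicator {s<..} x \<partial>lborel)" for s
    have tot: "(\<integral>\<^sup>+x. ennreal (\<phi>0 x powr \<beta>') * indicator {y1..} x \<partial>lborel) \<le> 1"
    proof -
      have "(\<integral>\<^sup>+x. ennreal (\<phi>0 x powr \<beta>') * indicator {y1..} x \<partial>lborel) = (\<integral>\<^sup>+ x \<in> {y1..}. ennreal (\<phi> x powr \<beta>') \<partial>lborel)"
        unfolding \<phi>0_def by (intro nn_integral_cong) (simp split: split_indicator)
      thus ?thesis using norm by simp
    qed
    have sp: "M1 s + M2 s \<le> 1" if "y1 \<le> s" for s
    proof -
      have "M1 s + M2 s = (\<integral>\<^sup>+x. ennreal (\<phi>0 x powr \<beta>') * indicator {y1..s} x + ennreal (\<phi>0 x powr \<beta>') * indicator {s<..} x \<partial>lborel)"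
        unfolding M1_def M2_def by (subst nn_integral_add) auto
      also have "\<dots> = (\<integral>\<^sup>+x. ennreal (\<phi>0 x powr \<beta>') * indicator {y1..} x \<partial>lborel)"
        using that by (intro nn_integral_cong) (auto split: split_indicator)
      finally show ?thesis using tot by simp
    qed
    have fin1: "M1 s \<noteq> top" "M2 s \<noteq> top" if "y1 \<le> s" for s
      using sp[OF that] by (auto simp: top_unique dest: add_leD1 add_leD2)
    define m where "m s = enn2real (M1 s)" for s
    define u where "u s = enn2real (M2 s)" for s
    have Hm: "m s \<ge> 0 \<and> u s \<ge> 0 \<and> m s + u s \<le> 1" if "y1 \<le> s" for s
    proof -
      have e: "M1 s = ennreal (m s)" "M2 s = ennreal (u s)" unfolding m_def u_def using fin1[OF that] by (simp_all add: ennreal_enn2real_if)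
      have "m s + u s = enn2real (M1 s + M2 s)" unfolding e by (simp add: m_def u_def ennreal_plus[symmetric] del: ennreal_plus)
      also have "\<dots> \<le> 1" using sp[OF that] by (intro enn2real_leI) auto
      finally show ?thesis unfolding m_def u_def by simp
    qed
    define I where "I y = (LBINT x:{y1..}. gker H \<gamma> q x y * \<phi> x)" for y
    have Ieq: "I y = enn2real (\<integral>\<^sup>+ x. ennreal (gker H \<gamma> q x y * \<phi>0 x) \<partial>lborel)" for y
    proof -
      have "I y = integral\<^sup>L lborel (\<lambda>x. gker H \<gamma> q x y * \<phi>0 x)"
        unfolding I_def set_lebesgue_integral_def \<phi>0_def by (simp add: mult_ac)
      also have "\<dots> = enn2real (\<integral>\<^sup>+ x. ennreal (gker H \<gamma> q x y * \<phi>0 x) \<partial>lborel)"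
        by (rule integral_eq_nn_integral) (auto simp: gker_def p0 assms less_imp_le[OF assms(1)] intro!: AE_I2 mult_nonneg_nonneg add_nonneg_nonneg)
      finally show ?thesis .
    qed
    have HI: "I y \<ge> 0" for y unfolding Ieq by simp
    have HY: "I y \<le> t1 powr \<beta> * (s - y1 + K) / \<beta> + t1 powr (-\<beta>') * m s / \<beta>' + t2 powr \<beta> * (y - s + K) / \<beta> + t2 powr (-\<beta>') * u s / \<beta>'"
      if s: "y1 \<le> s" "s \<le> y" and t: "t1 > 0" "t2 > 0" for s y t1 t2
    proof -
      have Y: "(\<integral>\<^sup>+x. ennreal (gker H \<gamma> q x y * \<phi>0 x) \<partial>lborel) \<le>
        ennreal (t1 powr \<beta> / \<beta> * (s - y1 + K) + t2 powr \<beta> / \<beta> * (y - s + K))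
        + ennreal (t1 powr (-\<beta>') / \<beta>') * M1 s + ennreal (t2 powr (-\<beta>') / \<beta>') * M2 s"
        unfolding M1_def M2_def K_def by (rule YL[OF assms(1,2) b' assms(5,3,4) m0 p0 z0 s t])
      have e: "M1 s = ennreal (m s)" "M2 s = ennreal (u s)" unfolding m_def u_def using fin1[OF s(1)] by (simp_all add: ennreal_enn2real_if)
      define R where "R = t1 powr \<beta> / \<beta> * (s - y1 + K) + t2 powr \<beta> / \<beta> * (y - s + K)"
      define X where "X = t1 powr (-\<beta>') / \<beta>' * m s"
      define W where "W = t2 powr (-\<beta>') / \<beta>' * u s"
      have R0: "R \<ge> 0" unfolding R_def using K1 s assms by (intro add_nonneg_nonneg mult_nonneg_nonneg) auto
      have X0: "X \<ge> 0" unfolding X_def using Hm[OF s(1)] b' by simp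
      have W0: "W \<ge> 0" unfolding W_def using Hm[OF s(1)] b' by simp
      have q1: "ennreal (t1 powr (-\<beta>') / \<beta>') * ennreal (m s) = ennreal X"
        unfolding X_def by (rule ennreal_mult[symmetric]) (use Hm[OF s(1)] b' in auto)
      have q2: "ennreal (t2 powr (-\<beta>') / \<beta>') * ennreal (u s) = ennreal W"
        unfolding W_def by (rule ennreal_mult[symmetric]) (use Hm[OF s(1)] b' in auto)
      have "ennreal R + ennreal X + ennreal W = ennreal (R + X + W)"
        using R0 X0 W0 by (simp add: ennreal_plus)
      hence "(\<integral>\<^sup>+x. ennreal (gker H \<gamma> q x y * \<phi>0 x) \<partial>lborel) \<le> ennreal (R + X + W)"
        using Y unfolding e q1 q2 R_def[symmetric] by simp
      hence "I y \<le> R + X + W" unfolding Ieq using R0 X0 W0 by (intro enn2real_leI) auto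
      hence "I y \<le> t1 powr \<beta> / \<beta> * (s - y1 + K) + t2 powr \<beta> / \<beta> * (y - s + K) + t1 powr (-\<beta>') / \<beta>' * m s + t2 powr (-\<beta>') / \<beta>' * u s"
        unfolding R_def X_def W_def by simp
      thus ?thesis by (simp add: field_simps)
    qed
    define lam where "lam y = I y powr \<beta> - (y - y1)" for y
    have cA: "\<And>y. y1 \<le> y \<Longrightarrow> lam y \<le> 2 * K"
      unfolding lam_def by (rule coreA[OF bb K1 HY Hm HI]) auto
    have cB: "y - s \<le> Dist mu" if "mu \<ge> 0" "y1 + Thr mu \<le> s" "s \<le> y" "lam s \<ge> - mu" "lam y \<ge> - mu" for mu s y
      using coreB[OF bb K1 HY Hm HI, of mu s y] that unfolding lam_def Thr_def Dist_def cU_def r_def d_def by auto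
    have "(\<integral>\<^sup>+ y. ennreal (exp (lam y - y1)) * indicator {y1..} y \<partial>lborel) \<le> ennreal C"
      unfolding C_def by (rule final_sum[OF cA _ cB T0 D0 G]) (use K1 in auto)
    moreover have "(\<integral>\<^sup>+ y \<in> {y1..}. ennreal (exp (- Ffun y1 H \<beta> \<gamma> q \<phi> y)) \<partial>lborel)
        = (\<integral>\<^sup>+ y. ennreal (exp (lam y - y1)) * indicator {y1..} y \<partial>lborel)"
      unfolding Ffun_def lam_def I_def by (intro nn_integral_cong) simp
    ultimately show "(\<integral>\<^sup>+ y \<in> {y1..}. ennreal (exp (- Ffun y1 H \<beta> \<gamma> q \<phi> y)) \<partial>lborel) \<le> ennreal C" by simp
  qed
qed

end
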